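(* Let $h=(w,\xi)$ be a Charlier diagram of length $n$ and suppose the $j$-th step of $w$ is blue East or South-East of height $k$. Then $$\mathrm{cr}(\varphi_r(h);j)=\mathrm{ne}(\varphi_l(h);j)=\xi_j-1,\qquad \mathrm{ne}(\varphi_r(h);j)=\mathrm{cr}(\varphi_l(h);j)=k-\xi_j.$$
   Context: A Motzkin path of length $n$ is a sequence of points $s_0=(0,0),s_1,\dots,s_n=(n,0)$ in $\mathbb Z^2$, $s_i=(i,y_i)$, with $y_i\ge0$ and each step $(s_{i-1},s_i)$ either East ($y_i=y_{i-1}$), North-East ($y_i=y_{i-1}+1$) or South-East ($y_i=y_{i-1}-1$); the step $(s_{i-1},s_i)$ has index $i$ and height $y_{i-1}$. A restricted bicolored Motzkin path is a Motzkin path whose East steps are each colored red or blue, such that every blue East step has height $>0$. A Charlier diagram of length $n$ is a pair $h=(w,\xi)$ with $w$ a restricted bicolored Motzkin path of length $n$ and $\xi=(\xi_1,\dots,\xi_n)$ integers with $\xi_i=1$ if step $i$ is North-East or red East, and $1\le\xi_i\le k$ if step $i$ is South-East or blue East of height $k$. The partition $\varphi_l(h)$ of $[n]$ is built as follows: maintain a set $V$ (initially empty) and edge set $E$; for $i=1,\dots,n$: if step $i$ is North-East, add $i$ to $V$; if red East, do nothing; if South-East or blue East (then $|V|$ equals the height $k$ of the step), let $x$ be the $\xi_i$-th smallest element of $V$, add edge $(x,i)$ to $E$, remove $x$ from $V$, and if the step is blue East add $i$ to $V$. $\varphi_l(h)$ is the partition of $[n]$ whose blocks are the connected components of $([n],E)$.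 $\varphi_r(h)$ is defined identically except that $x$ is the $\xi_i$-th largest element of $V$. For a partition $\pi$, edges are pairs $(i,j)$, $i<j$, of consecutive elements of a block; edges $e_1=(i_1,j_1)$, $e_2=(i_2,j_2)$ form a crossing with initial edge $e_1$ if $i_1<i_2<j_1<j_2$, and a nesting with interior edge $e_2$ if $i_1<i_2<j_2<j_1$. For $j$ the right endpoint of some edge, $\mathrm{cr}(\pi;j)$ is the number of crossings whose initial edge has right endpoint $j$, and $\mathrm{ne}(\pi;j)$ the number of nestings whose interior edge has right endpoint $j$. *)

theory Defs
  imports Main
begin

text \<open>Steps of a bicolored Motzkin path. Paths are lists; step i (1-based, as in the
paper) is the list element at position i-1.\<close>
datatype step = NE | SE | RedE | BlueE

fun hgt :: "step list \<Rightarrow> int" where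
  "hgt [] = 0"
| "hgt (s # ws) = (case s of NE \<Rightarrow> 1 | SE \<Rightarrow> -1 | _ \<Rightarrow> 0) + hgt ws"

text \<open>Height of the step with (1-based) index i is y_{i-1} = hgt (take (i-1) w).\<close>
definition step_height :: "step list \<Rightarrow> nat \<Rightarrow> int" where
  "step_height w i = hgt (take (i - 1) w)"

definition motzkin :: "step list \<Rightarrow> bool" where
  "motzkin w \<longleftrightarrow> (\<forall>i\<le>length w. hgt (take i w) \<ge> 0) \<and> hgt w = 0"

definition restricted_bicolored_motzkin :: "step list \<Rightarrow> bool" where
  "restricted_bicolored_motzkin w \<longleftrightarrow> motzkin w \<and>
     (\<forall>i\<in>{1..length w}. w ! (i - 1) = BlueE \<longrightarrow> step_height w i > 0)"

text \<open>Charlier diagram (w, xi): xi is a list with xi ! (i-1) = \<xi>_i.\<close>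
definition charlier_diagram :: "step list \<Rightarrow> nat list \<Rightarrow> bool" where
  "charlier_diagram w xi \<longleftrightarrow> restricted_bicolored_motzkin w \<and> length xi = length w \<and>
     (\<forall>i\<in>{1..length w}.
        ((w ! (i - 1) = NE \<or> w ! (i - 1) = RedE) \<longrightarrow> xi ! (i - 1) = 1) \<and>
        ((w ! (i - 1) = SE \<or> w ! (i - 1) = BlueE) \<longrightarrow>
            1 \<le> xi ! (i - 1) \<and> int (xi ! (i - 1)) \<le> step_height w i))"

definition pick :: "bool \<Rightarrow> nat set \<Rightarrow> nat \<Rightarrow> nat" where
  "pick left V m = (if left then sorted_list_of_set V ! (m - 1)
                    else rev (sorted_list_of_set V) ! (m - 1))"

text \<open>One step of the construction; the triple is (index i, step, \<xi>_i).\<close>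
fun phi_step :: "bool \<Rightarrow> nat set \<times> (nat \<times> nat) set \<Rightarrow> nat \<times> step \<times> nat
                  \<Rightarrow> nat set \<times> (nat \<times> nat) set" where
  "phi_step left (V, E) (i, s, m) =
     (case s of
        NE \<Rightarrow> (insert i V, E)
      | RedE \<Rightarrow> (V, E)
      | SE \<Rightarrow> (let x = pick left V m in (V - {x}, insert (x, i) E))
      | BlueE \<Rightarrow> (let x = pick left V m in (insert i (V - {x}), insert (x, i) E)))"

definition phi_edges :: "bool \<Rightarrow> step list \<Rightarrow> nat list \<Rightarrow> (nat \<times> nat) set" where
  "phi_edges left w xi =
     snd (foldl (phi_step left) ({}, {}) (zip [1..<length w + 1] (zip w xi)))"

definition components :: "nat \<Rightarrow> (nat \<times> nat) set \<Rightarrow> nat set set" where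
  "components n E =
     (\<lambda>i. {j \<in> {1..n}. (i, j) \<in> ((E \<union> E\<inverse>) \<inter> ({1..n} \<times> {1..n}))\<^sup>*}) ` {1..n}"

definition phi_l :: "step list \<Rightarrow> nat list \<Rightarrow> nat set set" where
  "phi_l w xi = components (length w) (phi_edges True w xi)"

definition phi_r :: "step list \<Rightarrow> nat list \<Rightarrow> nat set set" where
  "phi_r w xi = components (length w) (phi_edges False w xi)"

definition part_edges :: "nat set set \<Rightarrow> (nat \<times> nat) set" where
  "part_edges P = {(i, j). \<exists>B\<in>P. i \<in> B \<and> j \<in> B \<and> i < j \<and> \<not> (\<exists>m\<in>B. i < m \<and> m < j)}"

definition cr :: "nat set set \<Rightarrow> nat \<Rightarrow> nat" where
  "cr P j = card {(e1, e2). e1 \<in> part_edges P \<and> e2 \<in> part_edges P \<and> snd e1 = j \<and>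
                   fst e1 < fst e2 \<and> fst e2 < snd e1 \<and> snd e1 < snd e2}"

definition ne :: "nat set set \<Rightarrow> nat \<Rightarrow> nat" where
  "ne P j = card {(e1, e2). e1 \<in> part_edges P \<and> e2 \<in> part_edges P \<and> snd e2 = j \<and>
                   fst e1 < fst e2 \<and> fst e2 < snd e2 \<and> snd e2 < snd e1}"

end

theory Submission
  imports Defs
begin


lemma sorted_card:
  fixes L :: "nat list"
  assumes s: "sorted_wrt (<) L" and i: "i < length L"
  shows "card {v \<in> set L. v < L ! i} = i"
    and "card {v \<in> set L. v > L ! i} = length L - Suc i"
proof -
  have mono: "\<And>p q. p < length L \<Longrightarrow> q < length L \<Longrightarrow> (L ! p < L ! q) = (p < q)"
  proof -
    fix p q assume p: "p < length L" and q: "q < length L"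
    show "(L ! p < L ! q) = (p < q)"
    proof
      assume lt: "L ! p < L ! q"
      show "p < q"
      proof (rule ccontr)
        assume "\<not> p < q"
        then have "q < p \<or> q = p" by linarith
        then show False
        proof
          assume "q < p" then have "L ! q < L ! p" using sorted_wrt_nth_less[OF s _ p] by blast
          then show False using lt by simp
        next
          assume "q = p" then show False using lt by simp
        qed
      qed
    next
      assume "p < q" then show "L ! p < L ! q" using sorted_wrt_nth_less[OF s _ q] by blast
    qed
  qed
  have d: "distinct L" using s strict_sorted_iff by blast
  have inj: "\<And>A. A \<subseteq> {..<length L} \<Longrightarrow> inj_on (nth L) A"
    unfolding inj_on_def using d nth_eq_iff_index_eq by blast
  have e1: "{v \<in> set L. v < L ! i} = nth L ` {..<i}"
  proof (rule set_eqI, rule iffI)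
    fix v assume "v \<in> {v \<in> set L. v < L ! i}"
    then obtain p where p: "p < length L" "v = L ! p" "L ! p < L ! i" by (auto simp: in_set_conv_nth)
    then have "p < i" using mono[OF p(1) i] by simp
    then show "v \<in> nth L ` {..<i}" using p by blast
  next
    fix v assume "v \<in> nth L ` {..<i}"
    then obtain p where p: "p < i" "v = L ! p" by blast
    have pl: "p < length L" using p i by simp
    have "L ! p < L ! i" using mono[OF pl i] p by simp
    then show "v \<in> {v \<in> set L. v < L ! i}" using p pl nth_mem by blast
  qed
  have e2: "{v \<in> set L. v > L ! i} = nth L ` {Suc i..<length L}"
  proof (rule set_eqI, rule iffI)
    fix v assume "v \<in> {v \<in> set L. v > L ! i}"
    then obtain p where p: "p < length L" "v = L ! p" "L ! i < L ! p" by (auto simp: in_set_conv_nth)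
    then have "i < p" using mono[OF i p(1)] by simp
    then show "v \<in> nth L ` {Suc i..<length L}" using p by force
  next
    fix v assume "v \<in> nth L ` {Suc i..<length L}"
    then obtain p where p: "Suc i \<le> p" "p < length L" "v = L ! p" by auto
    have "L ! i < L ! p" using mono[OF i p(2)] p by simp
    then show "v \<in> {v \<in> set L. v > L ! i}" using p nth_mem by blast
  qed
  show "card {v \<in> set L. v < L ! i} = i"
    unfolding e1 by (subst card_image) (rule inj, use i in auto)
  show "card {v \<in> set L. v > L ! i} = length L - Suc i"
    unfolding e2 by (subst card_image) (rule inj, auto)
qed

lemma pick_facts:
  assumes f: "finite V" and m1: "1 \<le> m" and mk: "m \<le> card V"
  shows "pick True V m \<in> V \<and> card {v \<in> V. v < pick True V m} = m - 1 \<and>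
         card {v \<in> V. v > pick True V m} = card V - m"
    and "pick False V m \<in> V \<and> card {v \<in> V. v > pick False V m} = m - 1 \<and>
         card {v \<in> V. v < pick False V m} = card V - m"
proof -
  define L where "L = sorted_list_of_set V"
  have sL: "set L = V" and lL: "length L = card V" and sw: "sorted_wrt (<) L"
    using f by (auto simp: L_def strict_sorted_list_of_set)
  show "pick True V m \<in> V \<and> card {v \<in> V. v < pick True V m} = m - 1 \<and>
         card {v \<in> V. v > pick True V m} = card V - m"
  proof -
    have p: "pick True V m = L ! (m - 1)" by (simp add: pick_def L_def)
    have i: "m - 1 < length L" using m1 mk lL by simp
    have a: "L ! (m - 1) \<in> V" using i sL nth_mem by blast
    have b: "card {v \<in> V. v < L ! (m - 1)} = m - 1" using sorted_card(1)[OF sw i] sL by simp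
    have c: "card {v \<in> V. v > L ! (m - 1)} = card V - m"
      using sorted_card(2)[OF sw i] sL lL m1 by simp
    show ?thesis unfolding p using a b c by blast
  qed
  show "pick False V m \<in> V \<and> card {v \<in> V. v > pick False V m} = m - 1 \<and>
         card {v \<in> V. v < pick False V m} = card V - m"
  proof -
    have p: "pick False V m = L ! (card V - m)" using m1 mk lL
      by (simp add: pick_def L_def[symmetric] rev_nth)
    have i: "card V - m < length L" using m1 mk lL by simp
    have a: "L ! (card V - m) \<in> V" using i sL nth_mem by blast
    have b: "card {v \<in> V. v < L ! (card V - m)} = card V - m" using sorted_card(1)[OF sw i] sL by simp
    have c: "card {v \<in> V. v > L ! (card V - m)} = m - 1"
      using sorted_card(2)[OF sw i] sL lL m1 mk by simp
    show ?thesis unfolding p using a b c by blast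
  qed
qed


lemma pick_in: "finite V \<Longrightarrow> 1 \<le> m \<Longrightarrow> m \<le> card V \<Longrightarrow> pick left V m \<in> V"
  using pick_facts by (cases left) auto

definition dlt :: "step \<Rightarrow> int" where
  "dlt s = (case s of NE \<Rightarrow> 1 | SE \<Rightarrow> -1 | _ \<Rightarrow> 0)"

lemma hgt_app: "hgt (xs @ [s]) = hgt xs + dlt s"
  by (induction xs) (auto simp: dlt_def split: step.splits)

lemma hgt_take_Suc: "m < length w \<Longrightarrow> hgt (take (Suc m) w) = hgt (take m w) + dlt (w ! m)"
  by (simp add: take_Suc_conv_app_nth hgt_app)

definition trip :: "step list \<Rightarrow> nat list \<Rightarrow> (nat \<times> step \<times> nat) list" where
  "trip w xi = zip [1..<length w + 1] (zip w xi)"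

definition st :: "bool \<Rightarrow> step list \<Rightarrow> nat list \<Rightarrow> nat \<Rightarrow> nat set \<times> (nat \<times> nat) set" where
  "st left w xi m = foldl (phi_step left) ({}, {}) (take m (trip w xi))"

lemma st_0: "st left w xi 0 = ({}, {})"
  by (simp add: st_def)

lemma st_Suc:
  assumes "m < length w" "length xi = length w"
  shows "st left w xi (Suc m) = phi_step left (st left w xi m) (Suc m, w ! m, xi ! m)"
proof -
  have l: "length (trip w xi) = length w" using assms by (simp add: trip_def)
  have u: "[1..<length w + 1] ! m = Suc m" using assms nth_upt[of 1 m "length w + 1"] by simp
  have n: "trip w xi ! m = (Suc m, w ! m, xi ! m)" using assms u
    by (simp add: trip_def nth_zip del: upt_Suc)
  show ?thesis unfolding st_def using assms l n
    by (simp add: take_Suc_conv_app_nth)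
qed

lemma phi_edges_st: "length xi = length w \<Longrightarrow> phi_edges left w xi = snd (st left w xi (length w))"
  by (simp add: phi_edges_def st_def trip_def)

definition invar :: "nat \<Rightarrow> step list \<Rightarrow> nat set \<Rightarrow> (nat \<times> nat) set \<Rightarrow> bool" where
  "invar m w V E \<longleftrightarrow> finite V \<and> V \<subseteq> {1..m} \<and> int (card V) = hgt (take m w) \<and>
     (\<forall>a b. (a, b) \<in> E \<longrightarrow> 1 \<le> a \<and> a < b \<and> b \<le> m \<and> a \<notin> V) \<and>
     (\<forall>a b b'. (a, b) \<in> E \<longrightarrow> (a, b') \<in> E \<longrightarrow> b = b') \<and>
     (\<forall>a a' b. (a, b) \<in> E \<longrightarrow> (a', b) \<in> E \<longrightarrow> a = a')"

lemma cd_facts: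
  assumes cd: "charlier_diagram w xi" and m: "m < length w"
  shows "length xi = length w"
    and "hgt (take m w) \<ge> 0"
    and "w ! m = SE \<or> w ! m = BlueE \<Longrightarrow> 1 \<le> xi ! m \<and> int (xi ! m) \<le> hgt (take m w)"
    and "w ! m = BlueE \<Longrightarrow> hgt (take m w) > 0"
proof -
  have i: "Suc m \<in> {1..length w}" using m by simp
  show "length xi = length w" using cd by (simp add: charlier_diagram_def)
  show "hgt (take m w) \<ge> 0" using cd m
    by (simp add: charlier_diagram_def restricted_bicolored_motzkin_def motzkin_def)
  show "w ! m = SE \<or> w ! m = BlueE \<Longrightarrow> 1 \<le> xi ! m \<and> int (xi ! m) \<le> hgt (take m w)"
    using cd i unfolding charlier_diagram_def step_height_def by fastforce
  show "w ! m = BlueE \<Longrightarrow> hgt (take m w) > 0"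
    using cd i unfolding charlier_diagram_def restricted_bicolored_motzkin_def step_height_def
    by fastforce
qed

lemma inv_st:
  assumes cd: "charlier_diagram w xi"
  shows "m \<le> length w \<Longrightarrow> st left w xi m = (V, E) \<Longrightarrow> invar m w V E"
proof (induction m arbitrary: V E)
  case 0
  then show ?case by (simp add: st_0 invar_def)
next
  case (Suc m)
  obtain V0 E0 where s0: "st left w xi m = (V0, E0)" by (cases "st left w xi m")
  have m: "m < length w" using Suc.prems by simp
  have I: "invar m w V0 E0" using Suc.IH[OF _ s0] m by simp
  have lx: "length xi = length w" using cd_facts[OF cd m] by simp
  have sS: "(V, E) = phi_step left (V0, E0) (Suc m, w ! m, xi ! m)"
    using Suc.prems(2) st_Suc[OF m lx] s0 by simp
  have hS: "hgt (take (Suc m) w) = hgt (take m w) + dlt (w ! m)" using hgt_take_Suc[OF m] .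
  have fin: "finite V0" and sub: "V0 \<subseteq> {1..m}" and cV: "int (card V0) = hgt (take m w)"
    and eV: "\<And>a b. (a, b) \<in> E0 \<Longrightarrow> 1 \<le> a \<and> a < b \<and> b \<le> m \<and> a \<notin> V0"
    and fn: "\<And>a b b'. (a, b) \<in> E0 \<Longrightarrow> (a, b') \<in> E0 \<Longrightarrow> b = b'"
    and inj: "\<And>a a' b. (a, b) \<in> E0 \<Longrightarrow> (a', b) \<in> E0 \<Longrightarrow> a = a'"
    using I unfolding invar_def by blast+
  have nS: "Suc m \<notin> V0" using sub by auto
  show ?case
  proof (cases "w ! m")
    case NE
    then have VE: "V = insert (Suc m) V0" "E = E0" using sS by auto
    show ?thesis unfolding invar_def VE using fin sub cV eV fn inj nS hS NE
      apply (simp add: dlt_def)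
      apply (intro conjI allI impI)
      apply (auto dest: eV)
      done
  next
    case RedE
    then have VE: "V = V0" "E = E0" using sS by auto
    show ?thesis unfolding invar_def VE using fin sub cV eV fn inj nS hS RedE
      by (auto simp: dlt_def dest: eV)
  next
    case SE
    define x where "x = pick left V0 (xi ! m)"
    have VE: "V = V0 - {x}" "E = insert (x, Suc m) E0" using sS SE by (auto simp: x_def Let_def)
    have xr: "1 \<le> xi ! m" "xi ! m \<le> card V0" using cd_facts(3)[OF cd m] SE cV by auto
    have x: "x \<in> V0" unfolding x_def using pick_in[OF fin xr] .
    have c: "card (V0 - {x}) = card V0 - 1" using x fin by simp
    have c1: "card V0 \<ge> 1" using xr by simp
    show ?thesis unfolding invar_def VE using fin sub cV eV fn inj nS hS SE x c c1
      apply (simp add: dlt_def)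
      apply (intro conjI allI impI)
      apply (auto simp: of_nat_diff dest: eV)
      done
  next
    case BlueE
    define x where "x = pick left V0 (xi ! m)"
    have VE: "V = insert (Suc m) (V0 - {x})" "E = insert (x, Suc m) E0" using sS BlueE by (auto simp: x_def Let_def)
    have xr: "1 \<le> xi ! m" "xi ! m \<le> card V0" using cd_facts(3)[OF cd m] BlueE cV by auto
    have x: "x \<in> V0" unfolding x_def using pick_in[OF fin xr] .
    have c: "card (insert (Suc m) (V0 - {x})) = card V0" using x fin nS
      by (simp add: card_Diff_singleton) (metis Suc_pred card_gt_0_iff empty_iff)
    show ?thesis unfolding invar_def VE using fin sub cV eV fn inj nS hS BlueE x c
      apply (simp add: dlt_def)
      apply (intro conjI allI impI)
      apply (auto dest: eV)
      done
  qed
qed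



lemma rt_dir:
  assumes inj: "\<And>a a' b. (a, b) \<in> E \<Longrightarrow> (a', b) \<in> E \<Longrightarrow> a = a'"
    and fn: "\<And>a b b'. (a, b) \<in> E \<Longrightarrow> (a, b') \<in> E \<Longrightarrow> b = b'"
  shows "(a, b) \<in> (E \<union> E\<inverse>)\<^sup>* \<Longrightarrow> (a, b) \<in> E\<^sup>* \<or> (b, a) \<in> E\<^sup>*"
proof (induction rule: rtrancl_induct)
  case base
  then show ?case by simp
next
  case (step y z)
  from step.hyps(2) have "(y, z) \<in> E \<or> (z, y) \<in> E" by auto
  then show ?case
  proof
    assume yz: "(y, z) \<in> E"
    from step.IH show ?thesis
    proof
      assume "(a, y) \<in> E\<^sup>*" then show ?thesis using yz by auto
    next
      assume ya: "(y, a) \<in> E\<^sup>*"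
      show ?thesis
      proof (cases "y = a")
        case True then show ?thesis using yz by auto
      next
        case False
        then obtain s where "(y, s) \<in> E" "(s, a) \<in> E\<^sup>*" using ya
          by (metis converse_rtranclE)
        then show ?thesis using fn yz by auto
      qed
    qed
  next
    assume zy: "(z, y) \<in> E"
    from step.IH show ?thesis
    proof
      assume ay: "(a, y) \<in> E\<^sup>*"
      show ?thesis
      proof (cases "y = a")
        case True then show ?thesis using zy by auto
      next
        case False
        then obtain s where "(a, s) \<in> E\<^sup>*" "(s, y) \<in> E" using ay
          by (metis rtranclE)
        then show ?thesis using inj zy by auto
      qed
    next
      assume "(y, a) \<in> E\<^sup>*" then show ?thesis using zy by (meson converse_rtrancl_into_rtrancl)
    qed
  qed
qed

lemma rt_mono:
  assumes lt: "\<And>a b. (a, b) \<in> E \<Longrightarrow> a < (b::nat)"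
  shows "(a, b) \<in> E\<^sup>* \<Longrightarrow> a \<le> b"
  by (induction rule: rtrancl_induct) (auto dest: lt)

lemma part_edges_components:
  assumes box: "\<And>a b. (a, b) \<in> E \<Longrightarrow> 1 \<le> a \<and> a < b \<and> b \<le> n"
    and inj: "\<And>a a' b. (a, b) \<in> E \<Longrightarrow> (a', b) \<in> E \<Longrightarrow> a = a'"
    and fn: "\<And>a b b'. (a, b) \<in> E \<Longrightarrow> (a, b') \<in> E \<Longrightarrow> b = b'"
  shows "part_edges (components n E) = E"
proof -
  define R where "R = E \<union> E\<inverse>"
  have R: "(E \<union> E\<inverse>) \<inter> ({1..n} \<times> {1..n}) = R" 
  proof -
    have "E \<subseteq> {1..n} \<times> {1..n}" using box by fastforce
    then show ?thesis by (auto simp: R_def)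
  qed
  have symR: "\<And>a b. (a, b) \<in> R\<^sup>* \<Longrightarrow> (b, a) \<in> R\<^sup>*"
  proof -
    fix a b assume "(a, b) \<in> R\<^sup>*"
    then have "(b, a) \<in> (R\<inverse>)\<^sup>*" by (simp add: rtrancl_converse)
    moreover have "R\<inverse> = R" by (auto simp: R_def)
    ultimately show "(b, a) \<in> R\<^sup>*" by simp
  qed
  have lt: "\<And>a b. (a, b) \<in> E \<Longrightarrow> a < b" using box by blast
  have mono: "\<And>a b. (a, b) \<in> E\<^sup>* \<Longrightarrow> a \<le> b"
  proof -
    fix a b assume "(a, b) \<in> E\<^sup>*"
    then show "a \<le> b" by (induction rule: rtrancl_induct) (auto dest: lt)
  qed
  have dir: "\<And>a b. (a, b) \<in> R\<^sup>* \<Longrightarrow> a < b \<Longrightarrow> (a, b) \<in> E\<^sup>*"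
  proof -
    fix a b assume h1: "(a, b) \<in> R\<^sup>*" and h2: "a < b"
    have d: "(a, b) \<in> E\<^sup>* \<or> (b, a) \<in> E\<^sup>*"
      by (rule rt_dir) (use inj fn h1 in \<open>auto simp: R_def\<close>)
    then show "(a, b) \<in> E\<^sup>*" using mono h2 by (meson leD)
  qed
  have first: "\<And>a b. (a, b) \<in> E\<^sup>* \<Longrightarrow> a \<noteq> b \<Longrightarrow> \<exists>s. (a, s) \<in> E \<and> (s, b) \<in> E\<^sup>*"
    by (metis converse_rtranclE)
  have comps: "components n E = (\<lambda>i. {j \<in> {1..n}. (i, j) \<in> R\<^sup>*}) ` {1..n}"
    unfolding components_def R ..
  show ?thesis
  proof
    show "part_edges (components n E) \<subseteq> E"
    proof
      fix e assume "e \<in> part_edges (components n E)"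
      then obtain a b i where e: "e = (a, b)" and i: "i \<in> {1..n}"
        and a: "a \<in> {1..n}" "(i, a) \<in> R\<^sup>*" and b: "b \<in> {1..n}" "(i, b) \<in> R\<^sup>*" and ab: "a < b"
        and nob: "\<And>m. m \<in> {1..n} \<Longrightarrow> (i, m) \<in> R\<^sup>* \<Longrightarrow> a < m \<Longrightarrow> m < b \<Longrightarrow> False"
        unfolding part_edges_def comps by blast
      have "(a, b) \<in> R\<^sup>*" using symR[OF a(2)] b(2) by (rule rtrancl_trans)
      then have "(a, b) \<in> E\<^sup>*" using dir ab by blast
      then obtain s where as: "(a, s) \<in> E" and sb: "(s, b) \<in> E\<^sup>*" using first ab by blast
      have "s \<le> b" using mono[OF sb] .
      moreover have "s \<in> {1..n}" using box[OF as] by auto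
      moreover have "(i, s) \<in> R\<^sup>*" using a(2) as by (auto simp: R_def intro: rtrancl_into_rtrancl)
      moreover have "a < s" using lt[OF as] .
      ultimately have "s = b" using nob by force
      then show "e \<in> E" using as e by simp
    qed
  next
    show "E \<subseteq> part_edges (components n E)"
    proof
      fix e assume eE: "e \<in> E"
      then obtain a b where e: "e = (a, b)" by (cases e)
      have ab: "(a, b) \<in> E" using eE e by simp
      have an: "a \<in> {1..n}" and bn: "b \<in> {1..n}" and lab: "a < b" using box[OF ab] by auto
      define B where "B = {j \<in> {1..n}. (a, j) \<in> R\<^sup>*}"
      have BP: "B \<in> components n E" unfolding comps B_def using an by blast
      have aB: "a \<in> B" using an by (simp add: B_def)
      have bB: "b \<in> B" using bn ab by (auto simp: B_def R_def)
      have nob: "\<not> (\<exists>m\<in>B. a < m \<and> m < b)"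
      proof
        assume "\<exists>m\<in>B. a < m \<and> m < b"
        then obtain m where m: "(a, m) \<in> R\<^sup>*" "a < m" "m < b" by (auto simp: B_def)
        then have "(a, m) \<in> E\<^sup>*" using dir by blast
        then obtain s where as: "(a, s) \<in> E" and sm: "(s, m) \<in> E\<^sup>*" using first m by blast
        have "s = b" using fn[OF as ab] .
        then have "b \<le> m" using mono[OF sm] by simp
        then show False using m by simp
      qed
      show "e \<in> part_edges (components n E)"
        unfolding part_edges_def e using BP aB bB lab nob by blast
    qed
  qed
qed



lemma step_shape:
  assumes cd: "charlier_diagram w xi" and m: "m < length w"
    and s1: "st left w xi m = (V1, E1)" and s2: "st left w xi (Suc m) = (V, E)"
  shows "(V = V1 \<and> E = E1) \<or> (V = insert (Suc m) V1 \<and> E = E1) \<or>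
         (\<exists>x\<in>V1. (V = V1 - {x} \<or> V = insert (Suc m) (V1 - {x})) \<and> E = insert (x, Suc m) E1)"
    and "w ! m = SE \<or> w ! m = BlueE \<Longrightarrow> E = insert (pick left V1 (xi ! m), Suc m) E1"
proof -
  have lx: "length xi = length w" using cd_facts[OF cd m] by simp
  have I: "invar m w V1 E1" using inv_st[OF cd _ s1] m by simp
  have sS: "(V, E) = phi_step left (V1, E1) (Suc m, w ! m, xi ! m)"
    using s2 st_Suc[OF m lx] s1 by simp
  have fin: "finite V1" and cV: "int (card V1) = hgt (take m w)" using I by (auto simp: invar_def)
  show "(V = V1 \<and> E = E1) \<or> (V = insert (Suc m) V1 \<and> E = E1) \<or>
         (\<exists>x\<in>V1. (V = V1 - {x} \<or> V = insert (Suc m) (V1 - {x})) \<and> E = insert (x, Suc m) E1)"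
  proof (cases "w ! m")
    case NE then show ?thesis using sS by auto
  next
    case RedE then show ?thesis using sS by auto
  next
    case SE
    have xr: "1 \<le> xi ! m" "xi ! m \<le> card V1" using cd_facts(3)[OF cd m] SE cV by auto
    have x: "pick left V1 (xi ! m) \<in> V1" using pick_in[OF fin xr] .
    show ?thesis using sS SE x by (auto simp: Let_def)
  next
    case BlueE
    have xr: "1 \<le> xi ! m" "xi ! m \<le> card V1" using cd_facts(3)[OF cd m] BlueE cV by auto
    have x: "pick left V1 (xi ! m) \<in> V1" using pick_in[OF fin xr] .
    show ?thesis using sS BlueE x by (auto simp: Let_def)
  qed
  show "w ! m = SE \<or> w ! m = BlueE \<Longrightarrow> E = insert (pick left V1 (xi ! m), Suc m) E1"
    using sS by (auto simp: Let_def)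
qed

lemma track:
  assumes cd: "charlier_diagram w xi" and s0: "st left w xi m0 = (V0, E0)"
    and le: "m0 \<le> m"
  shows "m \<le> length w \<Longrightarrow> st left w xi m = (V, E) \<Longrightarrow>
    E0 \<subseteq> E \<and> (\<forall>a b. (a, b) \<in> E \<longrightarrow> (a, b) \<notin> E0 \<longrightarrow> b > m0) \<and>
    (\<forall>v\<in>V0. v \<in> V \<or> (\<exists>b. (v, b) \<in> E)) \<and>
    (\<forall>a b. (a, b) \<in> E \<longrightarrow> b > m0 \<longrightarrow> a \<in> V0 \<or> a > m0) \<and> V \<subseteq> V0 \<union> {v. v > m0}"
  using le
proof (induction m arbitrary: V E rule: dec_induct)
  case base
  have I: "invar m0 w V0 E0" using inv_st[OF cd base(1) s0] .
  have VE: "V = V0" "E = E0" using base s0 by simp_all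
  have h0: "\<forall>a b. (a, b) \<in> E0 \<longrightarrow> 1 \<le> a \<and> a < b \<and> b \<le> m0 \<and> a \<notin> V0"
    using I unfolding invar_def by (elim conjE)
  have h: "\<And>a b. (a, b) \<in> E0 \<Longrightarrow> \<not> b > m0"
  proof -
    fix a b assume "(a, b) \<in> E0"
    then have "b \<le> m0" using h0 by blast
    then show "\<not> b > m0" by simp
  qed
  show ?case unfolding VE using h by blast
next
  case (step m)
  obtain V1 E1 where s1: "st left w xi m = (V1, E1)" by (cases "st left w xi m")
  have m: "m < length w" using step.prems by simp
  have IH: "E0 \<subseteq> E1 \<and> (\<forall>a b. (a, b) \<in> E1 \<longrightarrow> (a, b) \<notin> E0 \<longrightarrow> b > m0) \<and>
    (\<forall>v\<in>V0. v \<in> V1 \<or> (\<exists>b. (v, b) \<in> E1)) \<and>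
    (\<forall>a b. (a, b) \<in> E1 \<longrightarrow> b > m0 \<longrightarrow> a \<in> V0 \<or> a > m0) \<and> V1 \<subseteq> V0 \<union> {v. v > m0}"
    using step.IH[OF _ s1] m by simp
  have sh: "(V = V1 \<and> E = E1) \<or> (V = insert (Suc m) V1 \<and> E = E1) \<or>
         (\<exists>x\<in>V1. (V = V1 - {x} \<or> V = insert (Suc m) (V1 - {x})) \<and> E = insert (x, Suc m) E1)"
    using step_shape(1)[OF cd m s1 step.prems(2)] .
  have mm: "m0 < Suc m" using step.hyps by simp
  from sh show ?case
  proof (elim disjE bexE conjE)
    assume "V = V1" "E = E1" then show ?thesis using IH by simp
  next
    assume "V = insert (Suc m) V1" "E = E1" then show ?thesis using IH mm by auto
  next
    fix x assume x: "x \<in> V1" and V: "V = V1 - {x}" and E: "E = insert (x, Suc m) E1"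
    show ?thesis unfolding V E using IH mm x by blast
  next
    fix x assume x: "x \<in> V1" and V: "V = insert (Suc m) (V1 - {x})" and E: "E = insert (x, Suc m) E1"
    show ?thesis unfolding V E using IH mm x by blast
  qed
qed



lemma count_lemma:
  fixes E :: "(nat \<times> nat) set"
  assumes lt: "\<And>a b. (a, b) \<in> E \<Longrightarrow> a < b"
    and fn: "\<And>a b b'. (a, b) \<in> E \<Longrightarrow> (a, b') \<in> E \<Longrightarrow> b = b'"
    and R1: "\<And>a. (a, j) \<in> E \<longleftrightarrow> a = x"
    and R2: "\<And>v. v \<in> V \<longleftrightarrow> v < j \<and> (\<exists>b\<ge>j. (v, b) \<in> E)"
  shows "card {(e1, e2). e1 \<in> E \<and> e2 \<in> E \<and> snd e1 = j \<and>
                   fst e1 < fst e2 \<and> fst e2 < snd e1 \<and> snd e1 < snd e2} = card {v \<in> V. v > x}"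
    and "card {(e1, e2). e1 \<in> E \<and> e2 \<in> E \<and> snd e2 = j \<and>
                   fst e1 < fst e2 \<and> fst e2 < snd e2 \<and> snd e2 < snd e1} = card {v \<in> V. v < x}"
proof -
  have xj: "(x, j) \<in> E" using R1 by simp
  have injfst: "\<And>T. T \<subseteq> E \<Longrightarrow> inj_on fst T"
    unfolding inj_on_def using fn by fastforce
  define T where "T = {e \<in> E. x < fst e \<and> fst e < j \<and> j < snd e}"
  have S1: "{(e1, e2). e1 \<in> E \<and> e2 \<in> E \<and> snd e1 = j \<and>
                   fst e1 < fst e2 \<and> fst e2 < snd e1 \<and> snd e1 < snd e2} = (\<lambda>e. ((x, j), e)) ` T"
  proof (rule set_eqI, rule iffI)
    fix p assume "p \<in> {(e1, e2). e1 \<in> E \<and> e2 \<in> E \<and> snd e1 = j \<and>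
                   fst e1 < fst e2 \<and> fst e2 < snd e1 \<and> snd e1 < snd e2}"
    then obtain a b c d where p: "p = ((a, b), (c, d))" "(a, b) \<in> E" "(c, d) \<in> E" "b = j"
      "a < c" "c < b" "b < d" by auto
    have "a = x" using R1 p by simp
    then show "p \<in> (\<lambda>e. ((x, j), e)) ` T" using p by (auto simp: T_def)
  next
    fix p assume "p \<in> (\<lambda>e. ((x, j), e)) ` T"
    then show "p \<in> {(e1, e2). e1 \<in> E \<and> e2 \<in> E \<and> snd e1 = j \<and>
                   fst e1 < fst e2 \<and> fst e2 < snd e1 \<and> snd e1 < snd e2}"
      using xj by (auto simp: T_def)
  qed
  have fT: "fst ` T = {v \<in> V. v > x}"
  proof (rule set_eqI, rule iffI)
    fix v assume "v \<in> fst ` T"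
    then obtain b where h: "(v, b) \<in> E" "x < v" "v < j" "j < b" by (auto simp: T_def)
    then have "\<exists>b\<ge>j. (v, b) \<in> E" using less_imp_le[of j b] by blast
    then have "v \<in> V" using R2 h by blast
    then show "v \<in> {v \<in> V. v > x}" using h by blast
  next
    fix v assume v: "v \<in> {v \<in> V. v > x}"
    then obtain b where b: "v < j" "b \<ge> j" "(v, b) \<in> E" "x < v" using R2 by auto
    have "b \<noteq> j" using R1 b by auto
    then have "(v, b) \<in> T" using b by (auto simp: T_def)
    then show "v \<in> fst ` T" by force
  qed
  show "card {(e1, e2). e1 \<in> E \<and> e2 \<in> E \<and> snd e1 = j \<and>
                   fst e1 < fst e2 \<and> fst e2 < snd e1 \<and> snd e1 < snd e2} = card {v \<in> V. v > x}"
    unfolding S1 fT[symmetric]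
    by (subst card_image) (auto intro: inj_onI simp: card_image injfst T_def)
  define U where "U = {e \<in> E. fst e < x \<and> j < snd e}"
  have S2: "{(e1, e2). e1 \<in> E \<and> e2 \<in> E \<and> snd e2 = j \<and>
                   fst e1 < fst e2 \<and> fst e2 < snd e2 \<and> snd e2 < snd e1} = (\<lambda>e. (e, (x, j))) ` U"
  proof (rule set_eqI, rule iffI)
    fix p assume "p \<in> {(e1, e2). e1 \<in> E \<and> e2 \<in> E \<and> snd e2 = j \<and>
                   fst e1 < fst e2 \<and> fst e2 < snd e2 \<and> snd e2 < snd e1}"
    then obtain a b c d where p: "p = ((a, b), (c, d))" "(a, b) \<in> E" "(c, d) \<in> E" "d = j"
      "a < c" "c < d" "d < b" by auto
    have "c = x" using R1 p by simp
    then show "p \<in> (\<lambda>e. (e, (x, j))) ` U" using p by (auto simp: U_def)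
  next
    fix p assume "p \<in> (\<lambda>e. (e, (x, j))) ` U"
    then show "p \<in> {(e1, e2). e1 \<in> E \<and> e2 \<in> E \<and> snd e2 = j \<and>
                   fst e1 < fst e2 \<and> fst e2 < snd e2 \<and> snd e2 < snd e1}"
      using xj lt[OF xj] by (auto simp: U_def)
  qed
  have fU: "fst ` U = {v \<in> V. v < x}"
  proof (rule set_eqI, rule iffI)
    fix v assume "v \<in> fst ` U"
    then obtain b where h: "(v, b) \<in> E" "v < x" "j < b" by (auto simp: U_def)
    then have "\<exists>b\<ge>j. (v, b) \<in> E" using less_imp_le[of j b] by blast
    moreover have "v < j" using h lt[OF xj] by simp
    ultimately have "v \<in> V" using R2 by blast
    then show "v \<in> {v \<in> V. v < x}" using h by blast
  next
    fix v assume v: "v \<in> {v \<in> V. v < x}"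
    then obtain b where b: "v < j" "b \<ge> j" "(v, b) \<in> E" "v < x" using R2 by auto
    have "b \<noteq> j" using R1 b by auto
    then have "(v, b) \<in> U" using b by (auto simp: U_def)
    then show "v \<in> fst ` U" by force
  qed
  show "card {(e1, e2). e1 \<in> E \<and> e2 \<in> E \<and> snd e2 = j \<and>
                   fst e1 < fst e2 \<and> fst e2 < snd e2 \<and> snd e2 < snd e1} = card {v \<in> V. v < x}"
    unfolding S2 fU[symmetric]
    by (subst card_image) (auto intro: inj_onI simp: card_image injfst U_def)
qed

lemma main_left:
  assumes cd: "charlier_diagram w xi" and j1: "1 \<le> j" and jn: "j \<le> length w"
    and wj: "w ! (j - 1) = BlueE \<or> w ! (j - 1) = SE"
    and s0: "st left w xi (j - 1) = (V0, E0)"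
  shows "(\<forall>a b. (a, b) \<in> phi_edges left w xi \<longrightarrow> 1 \<le> a \<and> a < b \<and> b \<le> length w) \<and>
    (\<forall>a b b'. (a, b) \<in> phi_edges left w xi \<longrightarrow> (a, b') \<in> phi_edges left w xi \<longrightarrow> b = b') \<and>
    (\<forall>a a' b. (a, b) \<in> phi_edges left w xi \<longrightarrow> (a', b) \<in> phi_edges left w xi \<longrightarrow> a = a') \<and>
    (\<forall>a. (a, j) \<in> phi_edges left w xi \<longleftrightarrow> a = pick left V0 (xi ! (j - 1))) \<and>
    (\<forall>v. v \<in> V0 \<longleftrightarrow> v < j \<and> (\<exists>b\<ge>j. (v, b) \<in> phi_edges left w xi)) \<and>
    finite V0 \<and> int (card V0) = step_height w j \<and> 1 \<le> xi ! (j - 1) \<and> xi ! (j - 1) \<le> card V0"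
proof -
  define n where "n = length w"
  define m0 where "m0 = j - 1"
  have m0: "m0 < length w" using j1 jn by (simp add: m0_def)
  have lx: "length xi = length w" using cd by (simp add: charlier_diagram_def)
  obtain Vn En where sn: "st left w xi n = (Vn, En)" by (cases "st left w xi n")
  have En: "phi_edges left w xi = En" using phi_edges_st[OF lx, of left] sn by (simp add: n_def)
  have In: "invar n w Vn En" using inv_st[OF cd _ sn] by (simp add: n_def)
  have h0: "hgt w = 0" using cd
    by (simp add: charlier_diagram_def restricted_bicolored_motzkin_def motzkin_def)
  have Vn: "Vn = {}" using In h0 by (auto simp: invar_def n_def)
  have I0: "invar m0 w V0 E0" using inv_st[OF cd _ s0[folded m0_def]] m0 by simp
  have Q0: "E0 \<subseteq> En \<and> (\<forall>a b. (a, b) \<in> En \<longrightarrow> (a, b) \<notin> E0 \<longrightarrow> b > m0) \<and>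
    (\<forall>v\<in>V0. v \<in> Vn \<or> (\<exists>b. (v, b) \<in> En)) \<and>
    (\<forall>a b. (a, b) \<in> En \<longrightarrow> b > m0 \<longrightarrow> a \<in> V0 \<or> a > m0) \<and> Vn \<subseteq> V0 \<union> {v. v > m0}"
    using track[OF cd s0[folded m0_def], of n Vn En] m0 sn by (simp add: n_def)
  obtain V1 E1 where s1: "st left w xi j = (V1, E1)" by (cases "st left w xi j")
  have jS: "j = Suc m0" using j1 by (simp add: m0_def)
  have st1: "st left w xi (Suc m0) = (V1, E1)" using s1 jS by simp
  have wm: "w ! m0 = SE \<or> w ! m0 = BlueE" using wj unfolding m0_def by blast
  have "E1 = insert (pick left V0 (xi ! m0), Suc m0) E0"
    by (rule step_shape(2)[OF cd m0 s0[folded m0_def] st1 wm])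
  then have E1: "E1 = insert (pick left V0 (xi ! m0), j) E0" using jS by simp
  have Q1: "E1 \<subseteq> En \<and> (\<forall>a b. (a, b) \<in> En \<longrightarrow> (a, b) \<notin> E1 \<longrightarrow> b > j)"
    using track[OF cd s1, of n Vn En] jn sn by (simp add: n_def)
  have fin0: "finite V0" and sub0: "V0 \<subseteq> {1..m0}" and c0: "int (card V0) = hgt (take m0 w)"
    and e0: "\<And>a b. (a, b) \<in> E0 \<Longrightarrow> 1 \<le> a \<and> a < b \<and> b \<le> m0 \<and> a \<notin> V0"
    using I0 unfolding invar_def by blast+
  have R1: "\<forall>a. (a, j) \<in> En \<longleftrightarrow> a = pick left V0 (xi ! (j - 1))"
  proof (intro allI iffI)
    fix a assume a: "(a, j) \<in> En"
    have aj: "(a, j) \<in> E1" using Q1 a by blast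
    have "\<not> (a, j) \<in> E0"
    proof
      assume "(a, j) \<in> E0"
      then have "j \<le> m0" using e0 by blast
      then show False using jS by simp
    qed
    then have "a = pick left V0 (xi ! m0)" using E1 aj by blast
    then show "a = pick left V0 (xi ! (j - 1))" by (simp add: m0_def)
  next
    fix a assume "a = pick left V0 (xi ! (j - 1))"
    then show "(a, j) \<in> En" using E1 Q1 by (auto simp: m0_def)
  qed
  have R2: "\<forall>v. v \<in> V0 \<longleftrightarrow> v < j \<and> (\<exists>b\<ge>j. (v, b) \<in> En)"
  proof (intro allI iffI)
    fix v assume v: "v \<in> V0"
    then have vj: "v < j" using sub0 jS by auto
    obtain b where b: "(v, b) \<in> En" using Q0 v Vn by blast
    have "(v, b) \<notin> E0" using e0 v by blast
    then have "b > m0" using Q0 b by blast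
    then have "b \<ge> j" using jS by simp
    then show "v < j \<and> (\<exists>b\<ge>j. (v, b) \<in> En)" using vj b by blast
  next
    fix v assume "v < j \<and> (\<exists>b\<ge>j. (v, b) \<in> En)"
    then obtain b where "v < j" "b \<ge> j" "(v, b) \<in> En" by blast
    then show "v \<in> V0" using Q0 jS by force
  qed
  have c0': "int (card V0) = step_height w j" using c0 by (simp add: step_height_def m0_def)
  have xr: "1 \<le> xi ! (j - 1) \<and> int (xi ! (j - 1)) \<le> hgt (take (j - 1) w)"
    using cd_facts(3)[OF cd m0] wj by (auto simp: m0_def)
  show ?thesis unfolding En using In R1 R2 fin0 c0' xr c0 unfolding invar_def n_def m0_def
    by auto
qed



lemma side:
  assumes cd: "charlier_diagram w xi" and j1: "1 \<le> j" and jn: "j \<le> length w"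
    and wj: "w ! (j - 1) = BlueE \<or> w ! (j - 1) = SE"
    and k: "int k = step_height w j"
  shows "\<exists>V x. part_edges (components (length w) (phi_edges left w xi)) = phi_edges left w xi \<and>
    cr (components (length w) (phi_edges left w xi)) j = card {v \<in> V. v > x} \<and>
    ne (components (length w) (phi_edges left w xi)) j = card {v \<in> V. v < x} \<and>
    x = pick left V (xi ! (j - 1)) \<and> finite V \<and> card V = k \<and> 1 \<le> xi ! (j - 1) \<and> xi ! (j - 1) \<le> k"
proof -
  obtain V0 E0 where s0: "st left w xi (j - 1) = (V0, E0)" by (cases "st left w xi (j - 1)")
  note M = main_left[OF cd j1 jn wj s0]
  define E where "E = phi_edges left w xi"
  define x where "x = pick left V0 (xi ! (j - 1))"
  have box: "\<And>a b. (a, b) \<in> E \<Longrightarrow> 1 \<le> a \<and> a < b \<and> b \<le> length w" using M by (simp add: E_def)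
  have fn: "\<And>a b b'. (a, b) \<in> E \<Longrightarrow> (a, b') \<in> E \<Longrightarrow> b = b'" using M by (simp add: E_def)
  have inj: "\<And>a a' b. (a, b) \<in> E \<Longrightarrow> (a', b) \<in> E \<Longrightarrow> a = a'" using M unfolding E_def by blast
  have R1: "\<And>a. (a, j) \<in> E \<longleftrightarrow> a = x" using M by (simp add: E_def x_def)
  have R2: "\<And>v. v \<in> V0 \<longleftrightarrow> v < j \<and> (\<exists>b\<ge>j. (v, b) \<in> E)" using M by (simp add: E_def)
  have lt: "\<And>a b. (a, b) \<in> E \<Longrightarrow> a < b" using box by blast
  have PE: "part_edges (components (length w) E) = E"
    using part_edges_components[of E "length w"] box inj fn by blast
  have ck: "card V0 = k" using M k by simp
  show ?thesis unfolding E_def[symmetric]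
    apply (rule exI[of _ V0], rule exI[of _ x])
    unfolding cr_def ne_def PE
    using count_lemma[of E j x V0, OF lt fn R1 R2] M ck x_def by simp
qed

theorem proposition3p2:
  fixes w :: "step list" and xi :: "nat list" and j k :: nat
  assumes "charlier_diagram w xi"
    and "1 \<le> j" and "j \<le> length w"
    and "w ! (j - 1) = BlueE \<or> w ! (j - 1) = SE"
    and "int k = step_height w j"
  shows "cr (phi_r w xi) j = xi ! (j - 1) - 1 \<and> ne (phi_l w xi) j = xi ! (j - 1) - 1 \<and>
         ne (phi_r w xi) j = k - xi ! (j - 1) \<and> cr (phi_l w xi) j = k - xi ! (j - 1)"
proof -
  obtain Vl xl where L: "cr (phi_l w xi) j = card {v \<in> Vl. v > xl}"
    "ne (phi_l w xi) j = card {v \<in> Vl. v < xl}" "xl = pick True Vl (xi ! (j - 1))"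
    "finite Vl" "card Vl = k" "1 \<le> xi ! (j - 1)" "xi ! (j - 1) \<le> k"
    using side[OF assms, of True] unfolding phi_l_def by blast
  obtain Vr xr where R: "cr (phi_r w xi) j = card {v \<in> Vr. v > xr}"
    "ne (phi_r w xi) j = card {v \<in> Vr. v < xr}" "xr = pick False Vr (xi ! (j - 1))"
    "finite Vr" "card Vr = k"
    using side[OF assms, of False] unfolding phi_r_def by blast
  show ?thesis
    using pick_facts(1)[of Vl "xi ! (j - 1)"] pick_facts(2)[of Vr "xi ! (j - 1)"] L R by simp
qed


end
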